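(* Let $0<c<1$. There is no set $A\subseteq\mathbb{N}$ such that $R_A(n)=cn+o(\sqrt{n})$ as $n\to\infty$.
   Context: $\mathbb{N}$ denotes the set of non-negative integers. For $A\subseteq\mathbb{N}$, $R_A(n)$ denotes the number of ordered pairs $(a,a')$ with $a,a'\in A$ and $a+a'=n$. *)

theory Defs
  imports "HOL-Analysis.Analysis" "HOL-Library.Landau_Symbols"
begin

definition rep_count :: "nat set \<Rightarrow> nat \<Rightarrow> nat" where
  "rep_count A n = card {(a, b). a \<in> A \<and> b \<in> A \<and> a + b = n}"

end

theory Submission
  imports Defs "HOL-Real_Asymp.Real_Asymp"
begin

lemma root_pow_inj:
  assumes "0 < M" "m < M" "n < M" "cis (2 * pi / real M) ^ m = cis (2 * pi / real M) ^ n"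
  shows "m = n"
proof -
  have "cis (2 * pi / real M) ^ k = cis (2 * pi * real k / real M)" for k
    unfolding Complex.DeMoivre by (rule arg_cong[where f=cis]) simp
  then show ?thesis
    using Complex.bij_betw_roots_unity[OF assms(1)] assms unfolding bij_betw_def inj_on_def by auto
qed

lemma orth:
  assumes "0 < M" "m < M" "n < M"
  defines "\<omega> \<equiv> cis (2 * pi / real M)"
  shows "(\<Sum>k<M. (\<omega> ^ m) ^ k * cnj ((\<omega> ^ n) ^ k)) = (if m = n then of_nat M else 0)"
proof -
  define u where "u = \<omega> ^ m * cnj (\<omega> ^ n)"
  have nw: "norm \<omega> = 1" by (simp add: \<omega>_def)
  have wM: "\<omega> ^ M = 1"
  proof -
    have "real M * (2 * pi / real M) = 2 * pi" using assms(1) by simp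
    then show ?thesis unfolding \<omega>_def Complex.DeMoivre by (simp add: complex_eq_iff)
  qed
  have eq: "(\<omega> ^ m) ^ k * cnj ((\<omega> ^ n) ^ k) = u ^ k" for k
    by (simp add: u_def power_mult_distrib)
  have cw: "cnj (\<omega> ^ n) * \<omega> ^ n = 1"
    using nw by (metis complex_norm_square mult.commute norm_power of_real_1 power_one)
  have uM: "u ^ M = 1"
  proof -
    have "u ^ M = (\<omega> ^ M) ^ m * cnj ((\<omega> ^ M) ^ n)"
      by (simp add: u_def power_mult_distrib flip: power_mult) (simp add: mult.commute)
    then show ?thesis using wM by simp
  qed
  show ?thesis
  proof (cases "m = n")
    case True
    then have "u = 1" using cw by (simp add: u_def mult.commute)
    have "(\<Sum>k<M. (\<omega> ^ m) ^ k * cnj ((\<omega> ^ n) ^ k)) = (\<Sum>k<M. u ^ k)"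
      by (rule sum.cong) (simp_all only: eq)
    then show ?thesis using True \<open>u = 1\<close> by simp
  next
    case False
    have "u \<noteq> 1"
    proof
      assume "u = 1"
      have "\<omega> ^ m = \<omega> ^ m * (cnj (\<omega> ^ n) * \<omega> ^ n)" using cw by simp
      also have "\<dots> = u * \<omega> ^ n" by (simp only: u_def mult.assoc)
      also have "\<dots> = \<omega> ^ n" using \<open>u = 1\<close> by simp
      finally have "\<omega> ^ m = \<omega> ^ n" .
      then show False using root_pow_inj assms False by auto
    qed
    then have "(\<Sum>k<M. u ^ k) = 0" using uM by (simp add: geometric_sum)
    moreover have "(\<Sum>k<M. (\<omega> ^ m) ^ k * cnj ((\<omega> ^ n) ^ k)) = (\<Sum>k<M. u ^ k)"
      by (rule sum.cong) (simp_all only: eq)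
    ultimately show ?thesis using False by simp
  qed
qed

lemma parseval:
  fixes q :: "nat \<Rightarrow> real" and r :: real
  assumes "0 < M" "S \<subseteq> {..<M}"
  defines "\<omega> \<equiv> cis (2 * pi / real M)"
  shows "(\<Sum>k<M. (cmod (\<Sum>n\<in>S. of_real (q n) * (of_real r * \<omega> ^ k) ^ n))\<^sup>2)
         = real M * (\<Sum>n\<in>S. (q n)\<^sup>2 * (r\<^sup>2) ^ n)"
proof -
  have fin: "finite S" using assms(2) finite_subset by blast
  have "complex_of_real (\<Sum>k<M. (cmod (\<Sum>n\<in>S. of_real (q n) * (of_real r * \<omega> ^ k) ^ n))\<^sup>2)
     = (\<Sum>k<M. (\<Sum>m\<in>S. of_real (q m) * (of_real r * \<omega> ^ k) ^ m) * cnj (\<Sum>n\<in>S. of_real (q n) * (of_real r * \<omega> ^ k) ^ n))"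
    by (simp only: of_real_sum complex_norm_square)
  also have "\<dots> = (\<Sum>k<M. \<Sum>m\<in>S. \<Sum>n\<in>S. of_real (q m * q n * r ^ m * r ^ n) * ((\<omega> ^ m) ^ k * cnj ((\<omega> ^ n) ^ k)))"
    by (simp only: sum_product cnj_sum) (simp add: power_mult_distrib mult_ac flip: power_mult)
  also have "\<dots> = (\<Sum>m\<in>S. \<Sum>k<M. \<Sum>n\<in>S. of_real (q m * q n * r ^ m * r ^ n) * ((\<omega> ^ m) ^ k * cnj ((\<omega> ^ n) ^ k)))"
    by (rule sum.swap)
  also have "\<dots> = (\<Sum>m\<in>S. \<Sum>n\<in>S. \<Sum>k<M. of_real (q m * q n * r ^ m * r ^ n) * ((\<omega> ^ m) ^ k * cnj ((\<omega> ^ n) ^ k)))"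
    by (rule sum.cong[OF refl], rule sum.swap)
  also have "\<dots> = (\<Sum>m\<in>S. \<Sum>n\<in>S. of_real (q m * q n * r ^ m * r ^ n) * (\<Sum>k<M. (\<omega> ^ m) ^ k * cnj ((\<omega> ^ n) ^ k)))"
    by (simp only: sum_distrib_left)
  also have "\<dots> = (\<Sum>m\<in>S. \<Sum>n\<in>S. of_real (q m * q n * r ^ m * r ^ n) * (if m = n then of_nat M else 0))"
  proof (rule sum.cong[OF refl], rule sum.cong[OF refl])
    fix m n assume "m \<in> S" "n \<in> S"
    then have "(\<Sum>k<M. (\<omega> ^ m) ^ k * cnj ((\<omega> ^ n) ^ k)) = (if m = n then of_nat M else 0)"
      using assms(1,2) unfolding \<omega>_def by (intro orth) auto
    then show "of_real (q m * q n * r ^ m * r ^ n) * (\<Sum>k<M. (\<omega> ^ m) ^ k * cnj ((\<omega> ^ n) ^ k))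
       = of_real (q m * q n * r ^ m * r ^ n) * (if m = n then of_nat M else 0)" by (simp only:)
  qed
  also have "\<dots> = (\<Sum>m\<in>S. of_real (q m * q m * r ^ m * r ^ m) * of_nat M)"
    using fin by (simp add: if_distrib cong: if_cong)
  also have "\<dots> = complex_of_real (real M * (\<Sum>n\<in>S. (q n)\<^sup>2 * (r\<^sup>2) ^ n))"
    by (simp add: sum_distrib_left power2_eq_square power_mult_distrib mult_ac flip: power_mult)
  finally show ?thesis by (simp only: of_real_eq_iff)
qed

lemma group_prod:
  fixes z :: "'a::comm_semiring_1"
  assumes "finite S" "finite T" "\<And>a b. a \<in> S \<Longrightarrow> b \<in> T \<Longrightarrow> a + b < L"
  shows "(\<Sum>a\<in>S. z ^ a) * (\<Sum>b\<in>T. z ^ b) = (\<Sum>n<L. of_nat (card {p \<in> S \<times> T. fst p + snd p = n}) * z ^ n)"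
proof -
  have "(\<Sum>a\<in>S. z ^ a) * (\<Sum>b\<in>T. z ^ b) = (\<Sum>p\<in>S \<times> T. z ^ (fst p + snd p))"
    by (simp add: sum_product sum.cartesian_product power_add case_prod_beta)
  also have "\<dots> = (\<Sum>n<L. \<Sum>p\<in>{p \<in> S \<times> T. fst p + snd p = n}. z ^ (fst p + snd p))"
    by (rule sum.group[symmetric]) (use assms in auto)
  also have "\<dots> = (\<Sum>n<L. \<Sum>p\<in>{p \<in> S \<times> T. fst p + snd p = n}. z ^ n)"
    by (rule sum.cong[OF refl], rule sum.cong[OF refl]) auto
  also have "\<dots> = (\<Sum>n<L. of_nat (card {p \<in> S \<times> T. fst p + snd p = n}) * z ^ n)"
    by (simp add: sum_constant)
  finally show ?thesis .
qed

lemma card_pairs_le: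
  fixes S T :: "nat set"
  shows "card {p \<in> S \<times> T. fst p + snd p = n} \<le> n + 1"
proof -
  have "{p \<in> S \<times> T. fst p + snd p = n} \<subseteq> (\<lambda>i. (i, n - i)) ` {..n}" by force
  then have "card {p \<in> S \<times> T. fst p + snd p = n} \<le> card ((\<lambda>i. (i, n - i)) ` {..n})"
    by (intro card_mono) auto
  also have "\<dots> \<le> card {..n}" by (rule card_image_le) auto
  finally show ?thesis by simp
qed

lemma card_rep:
  assumes "n < N"
  shows "card {p \<in> (A \<inter> {..<N}) \<times> (A \<inter> {..<N}). fst p + snd p = n} = rep_count A n"
  unfolding rep_count_def
  by (rule arg_cong[where f=card]) (use assms in auto)

lemma card_W:
  assumes "n \<le> N"
  shows "card {p \<in> {..<N} \<times> {1..N}. fst p + snd p = n} = n"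
proof -
  have "{p \<in> {..<N} \<times> {1..N}. fst p + snd p = n} = (\<lambda>i. (i, n - i)) ` {..<n}"
    using assms by force
  moreover have "inj_on (\<lambda>i. (i, n - i)) {..<n}" by (auto simp: inj_on_def)
  ultimately show ?thesis by (simp add: card_image)
qed

lemma amgm_lam:
  fixes x lam :: real
  assumes "lam > 0"
  shows "x \<le> (lam * x\<^sup>2 + 1 / lam) / 2"
proof -
  have "lam * x\<^sup>2 + 1 / lam - 2 * x = (lam * x - 1)\<^sup>2 / lam"
    using assms by (simp add: power2_eq_square field_simps)
  moreover have "0 \<le> (lam * x - 1)\<^sup>2 / lam" using assms by simp
  ultimately have "0 \<le> lam * x\<^sup>2 + 1 / lam - 2 * x" by simp
  then show ?thesis by simp
qed

lemma key_ineq: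
  fixes A :: "nat set" and s c lam :: real and N :: nat
  assumes "N > 0" "0 \<le> s" "0 \<le> c" "lam > 0"
  defines "SA \<equiv> A \<inter> {..<N}"
  defines "d \<equiv> \<lambda>n. real (card {p \<in> SA \<times> SA. fst p + snd p = n})
                  - c * real (card {p \<in> {..<N} \<times> {1..N}. fst p + snd p = n})"
  shows "(\<Sum>a\<in>SA. s ^ a) \<le> c * ((\<Sum>i<N. s ^ i) + (\<Sum>j\<in>{1..N}. s ^ j)) / 2
           + (lam * (\<Sum>n<2*N. (d n)\<^sup>2 * s ^ n) + 1 / lam) / 2"
proof -
  define M where "M = 2 * N"
  define r where "r = sqrt s"
  define \<omega> where "\<omega> = cis (2 * pi / real M)"
  have M0: "0 < M" using assms(1) by (simp add: M_def)
  have r2: "r\<^sup>2 = s" using assms(2) by (simp add: r_def)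
  define P where "P = (\<lambda>z::complex. \<Sum>a\<in>SA. z ^ a)"
  define H1 where "H1 = (\<lambda>z::complex. \<Sum>a\<in>{..<N}. z ^ a)"
  define H2 where "H2 = (\<lambda>z::complex. \<Sum>a\<in>{1..N}. z ^ a)"
  define D where "D = (\<lambda>z::complex. \<Sum>n<M. of_real (d n) * z ^ n)"
  have finSA: "finite SA" by (simp add: SA_def)
  have ident: "P z * P z = of_real c * (H1 z * H2 z) + D z" for z
  proof -
    have "P z * P z = (\<Sum>n<M. of_nat (card {p \<in> SA \<times> SA. fst p + snd p = n}) * z ^ n)"
      unfolding P_def by (rule group_prod) (auto simp: finSA SA_def M_def)
    moreover have "H1 z * H2 z = (\<Sum>n<M. of_nat (card {p \<in> {..<N} \<times> {1..N}. fst p + snd p = n}) * z ^ n)"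
      unfolding H1_def H2_def by (rule group_prod) (auto simp: M_def)
    ultimately show ?thesis
      by (simp add: D_def d_def sum_distrib_left sum_subtractf algebra_simps)
  qed
  have pw: "(cmod (P z))\<^sup>2 \<le> c * ((cmod (H1 z))\<^sup>2 + (cmod (H2 z))\<^sup>2) / 2 + (lam * (cmod (D z))\<^sup>2 + 1 / lam) / 2" for z
  proof -
    have "(cmod (P z))\<^sup>2 = cmod (P z * P z)" by (simp add: norm_mult power2_eq_square)
    also have "\<dots> \<le> cmod (of_real c * (H1 z * H2 z)) + cmod (D z)"
      unfolding ident by (rule norm_triangle_ineq)
    also have "cmod (of_real c * (H1 z * H2 z)) = c * (cmod (H1 z) * cmod (H2 z))"
      using assms(3) by (simp add: norm_mult)
    also have "cmod (H1 z) * cmod (H2 z) \<le> ((cmod (H1 z))\<^sup>2 + (cmod (H2 z))\<^sup>2) / 2"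
      using sum_squares_bound[of "cmod (H1 z)" "cmod (H2 z)"] by (simp add: power2_eq_square)
    also have "cmod (D z) \<le> (lam * (cmod (D z))\<^sup>2 + 1 / lam) / 2"
      by (rule amgm_lam[OF assms(4)])
    finally show ?thesis using assms(3) by (simp add: mult_left_mono)
  qed
  have sub1: "SA \<subseteq> {..<M}" "{..<N} \<subseteq> {..<M}" "{1..N} \<subseteq> {..<M}" "{..<M} \<subseteq> {..<M}"
    by (auto simp: SA_def M_def)
  have eP: "(\<Sum>k<M. (cmod (P (of_real r * \<omega> ^ k)))\<^sup>2) = real M * (\<Sum>a\<in>SA. s ^ a)"
    using parseval[OF M0 sub1(1), of "\<lambda>_. 1" r] by (simp add: P_def \<omega>_def r2)
  have eH1: "(\<Sum>k<M. (cmod (H1 (of_real r * \<omega> ^ k)))\<^sup>2) = real M * (\<Sum>a<N. s ^ a)"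
    using parseval[OF M0 sub1(2), of "\<lambda>_. 1" r] by (simp add: H1_def \<omega>_def r2)
  have eH2: "(\<Sum>k<M. (cmod (H2 (of_real r * \<omega> ^ k)))\<^sup>2) = real M * (\<Sum>a\<in>{1..N}. s ^ a)"
    using parseval[OF M0 sub1(3), of "\<lambda>_. 1" r] by (simp add: H2_def \<omega>_def r2)
  have eD: "(\<Sum>k<M. (cmod (D (of_real r * \<omega> ^ k)))\<^sup>2) = real M * (\<Sum>n<M. (d n)\<^sup>2 * s ^ n)"
    using parseval[OF M0 sub1(4), of d r] by (simp add: D_def \<omega>_def r2)
  have "real M * (\<Sum>a\<in>SA. s ^ a) \<le> (\<Sum>k<M. c * ((cmod (H1 (of_real r * \<omega> ^ k)))\<^sup>2 + (cmod (H2 (of_real r * \<omega> ^ k)))\<^sup>2) / 2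
          + (lam * (cmod (D (of_real r * \<omega> ^ k)))\<^sup>2 + 1 / lam) / 2)"
    unfolding eP[symmetric] by (rule sum_mono) (rule pw)
  also have "\<dots> = c * ((\<Sum>k<M. (cmod (H1 (of_real r * \<omega> ^ k)))\<^sup>2) + (\<Sum>k<M. (cmod (H2 (of_real r * \<omega> ^ k)))\<^sup>2)) / 2
          + (lam * (\<Sum>k<M. (cmod (D (of_real r * \<omega> ^ k)))\<^sup>2) + real M / lam) / 2"
    by (simp add: sum.distrib sum_distrib_left sum_divide_distrib[symmetric] add_divide_distrib distrib_left)
  also have "\<dots> = real M * (c * ((\<Sum>i<N. s ^ i) + (\<Sum>j\<in>{1..N}. s ^ j)) / 2
           + (lam * (\<Sum>n<M. (d n)\<^sup>2 * s ^ n) + 1 / lam) / 2)"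
    unfolding eH1 eH2 eD by (simp add: algebra_simps add_divide_distrib)
  finally show ?thesis using M0 by (simp add: M_def)
qed

lemma sum_nx:
  fixes s :: real
  shows "(1 - s)\<^sup>2 * (\<Sum>n<N. real n * s ^ n) = s - real N * s ^ N + (real N - 1) * s ^ (N + 1)"
proof (induction N)
  case 0
  then show ?case by simp
next
  case (Suc N)
  have "(1 - s)\<^sup>2 * (\<Sum>n<Suc N. real n * s ^ n) = (1 - s)\<^sup>2 * (\<Sum>n<N. real n * s ^ n) + (1 - s)\<^sup>2 * (real N * s ^ N)"
    by (simp add: distrib_left)
  also have "\<dots> = s - real N * s ^ N + (real N - 1) * s ^ (N + 1) + (1 - s)\<^sup>2 * (real N * s ^ N)"
    using Suc by simp
  also have "\<dots> = s - real (Suc N) * s ^ Suc N + (real (Suc N) - 1) * s ^ (Suc N + 1)"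
    by (simp add: power2_eq_square algebra_simps)
  finally show ?case .
qed

lemma geom_le:
  fixes s :: real
  assumes "0 \<le> s" "s < 1"
  shows "(\<Sum>n<N. s ^ n) \<le> 1 / (1 - s)"
proof -
  have "(\<Sum>n<N. s ^ n) = (1 - s ^ N) / (1 - s)" using assms by (simp add: sum_gp_strict)
  also have "\<dots> \<le> 1 / (1 - s)" using assms by (intro divide_right_mono) auto
  finally show ?thesis .
qed

lemma nx_bounds:
  fixes s :: real
  assumes "0 \<le> s" "s < 1" "N > 0"
  shows "(\<Sum>n<N. real n * s ^ n) \<le> 1 / (1 - s)\<^sup>2"
    and "(s - real N * s ^ N) / (1 - s)\<^sup>2 \<le> (\<Sum>n<N. real n * s ^ n)"
proof -
  have t0: "(1 - s)\<^sup>2 > 0" using assms by simp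
  have e: "(\<Sum>n<N. real n * s ^ n) = (s - real N * s ^ N + (real N - 1) * s ^ (N + 1)) / (1 - s)\<^sup>2"
    using sum_nx[of s N] t0 by (simp add: field_simps)
  have a: "(real N - 1) * s ^ (N + 1) \<le> real N * s ^ N"
  proof -
    have "(real N - 1) * s ^ (N + 1) \<le> real N * s ^ (N + 1)" using assms by (simp add: mult_right_mono)
    also have "\<dots> \<le> real N * s ^ N" using assms by (intro mult_left_mono power_decreasing) auto
    finally show ?thesis .
  qed
  have b: "0 \<le> (real N - 1) * s ^ (N + 1)" using assms by simp
  show "(\<Sum>n<N. real n * s ^ n) \<le> 1 / (1 - s)\<^sup>2"
    unfolding e using a assms t0 by (intro divide_right_mono) auto
  show "(s - real N * s ^ N) / (1 - s)\<^sup>2 \<le> (\<Sum>n<N. real n * s ^ n)"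
    unfolding e using b t0 by (intro divide_right_mono) auto
qed

lemma poly_geom_lim:
  fixes s :: real
  assumes "0 < s" "s < 1"
  shows "(\<lambda>n. real n ^ 3 * s ^ n) \<longlonglongrightarrow> 0"
  using assms by real_asymp

theorem theorem10:
  fixes c :: real
  assumes "0 < c" and "c < 1"
  shows "\<not> (\<exists>A :: nat set.
           (\<lambda>n. real (rep_count A n) - c * real n) \<in> o(\<lambda>n. sqrt (real n)))"
proof
  assume "\<exists>A :: nat set. (\<lambda>n. real (rep_count A n) - c * real n) \<in> o(\<lambda>n. sqrt (real n))"
  then obtain A :: "nat set" where ho: "(\<lambda>n. real (rep_count A n) - c * real n) \<in> o(\<lambda>n. sqrt (real n))"
    by blast
  define e where "e n = real (rep_count A n) - c * real n" for n
  define \<epsilon> where "\<epsilon> = (c - c\<^sup>2) / 20"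
  have cc: "c\<^sup>2 < c" using assms by (simp add: power2_eq_square)
  have \<epsilon>0: "\<epsilon> > 0" using cc by (simp add: \<epsilon>_def)
  have \<epsilon>1: "\<epsilon> \<le> 1"
  proof -
    have "c - c\<^sup>2 \<le> 20" using assms by (smt (verit) zero_le_power2)
    then show ?thesis by (simp add: \<epsilon>_def)
  qed
  have "eventually (\<lambda>n. norm (real (rep_count A n) - c * real n) \<le> \<epsilon> * norm (sqrt (real n))) sequentially"
    by (rule landau_o.smallD[OF ho \<epsilon>0])
  then obtain n0 where n0: "\<And>n. n \<ge> n0 \<Longrightarrow> \<bar>e n\<bar> \<le> \<epsilon> * sqrt (real n)"
    unfolding eventually_sequentially e_def by auto
  define C where "C = (\<Sum>n<n0. \<bar>e n\<bar>)"
  have C0: "C \<ge> 0" by (simp add: C_def sum_nonneg)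
  have eb: "\<bar>e n\<bar> \<le> \<epsilon> * sqrt (real n) + C" for n
  proof (cases "n < n0")
    case True
    then have "\<bar>e n\<bar> \<le> C" unfolding C_def by (intro member_le_sum) auto
    then show ?thesis using \<epsilon>0 by (simp add: add_increasing)
  next
    case False
    then show ?thesis using n0[of n] C0 by simp
  qed
  have sq: "sqrt (real n) \<le> real n + 1" for n
  proof -
    have "(real n + 1)\<^sup>2 = real n * real n + 2 * real n + 1" by (simp add: power2_eq_square algebra_simps)
    moreover have "real n * real n \<ge> 0" by simp
    ultimately have "real n \<le> (real n + 1)\<^sup>2" by linarith
    then have "sqrt (real n) \<le> sqrt ((real n + 1)\<^sup>2)" by (rule real_sqrt_le_mono)
    then show ?thesis by simp
  qed
  have e1: "\<bar>e n\<bar> \<le> \<epsilon> * (real n + 1) + C" for n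
  proof -
    have "\<epsilon> * sqrt (real n) \<le> \<epsilon> * (real n + 1)" using sq[of n] \<epsilon>0 by (intro mult_left_mono) auto
    then show ?thesis using eb[of n] by linarith
  qed
  have e2: "(e n)\<^sup>2 \<le> 2 * \<epsilon>\<^sup>2 * real n + 2 * C\<^sup>2" for n
  proof -
    have "(e n)\<^sup>2 = \<bar>e n\<bar>\<^sup>2" by simp
    also have "\<dots> \<le> (\<epsilon> * sqrt (real n) + C)\<^sup>2" by (intro power_mono eb) auto
    also have "\<dots> \<le> 2 * (\<epsilon> * sqrt (real n))\<^sup>2 + 2 * C\<^sup>2"
      using sum_squares_bound[of "\<epsilon> * sqrt (real n)" C] by (simp add: power2_eq_square algebra_simps)
    also have "(\<epsilon> * sqrt (real n))\<^sup>2 = \<epsilon>\<^sup>2 * real n" by (simp add: power_mult_distrib)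
    finally show ?thesis by simp
  qed
  define t where "t = min (1/2) (min (\<epsilon>\<^sup>2 / (2 * C\<^sup>2 + 1)) (\<epsilon> / (2 * c + \<epsilon> + C + 1)))"
  have q1: "2 * C\<^sup>2 + 1 > 0" by (intro add_nonneg_pos) auto
  have q2: "2 * c + \<epsilon> + C + 1 > 0" using assms \<epsilon>0 C0 by simp
  have p1: "\<epsilon>\<^sup>2 / (2 * C\<^sup>2 + 1) > 0" using \<epsilon>0 q1 by (intro divide_pos_pos) auto
  have p2: "\<epsilon> / (2 * c + \<epsilon> + C + 1) > 0" using \<epsilon>0 q2 by (intro divide_pos_pos) auto
  have t0: "t > 0" using p1 p2 by (simp add: t_def)
  have th: "t \<le> 1/2" unfolding t_def by (rule min.cobounded1)
  have tA: "t * (2 * C\<^sup>2 + 1) \<le> \<epsilon>\<^sup>2"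
  proof -
    have "t \<le> \<epsilon>\<^sup>2 / (2 * C\<^sup>2 + 1)" unfolding t_def by (meson min.cobounded1 min.cobounded2 order_trans)
    then show ?thesis using q1 by (simp add: field_simps)
  qed
  have tB: "t * (2 * c + \<epsilon> + C + 1) \<le> \<epsilon>"
  proof -
    have "t \<le> \<epsilon> / (2 * c + \<epsilon> + C + 1)" unfolding t_def by (meson min.cobounded1 min.cobounded2 order_trans)
    moreover have "2 * c + \<epsilon> + C + 1 > 0" using assms \<epsilon>0 C0 by simp
    ultimately show ?thesis by (simp add: field_simps)
  qed
  define s where "s = 1 - t"
  have s0: "0 < s" "s < 1" using t0 th by (auto simp: s_def)
  have ts: "1 - s = t" by (simp add: s_def)
  from poly_geom_lim[OF s0] have "eventually (\<lambda>n. real n ^ 3 * s ^ n < t / 16) sequentially"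
    using t0 by (intro order_tendstoD) auto
  then obtain N0 where N0: "\<And>n. n \<ge> N0 \<Longrightarrow> real n ^ 3 * s ^ n < t / 16"
    unfolding eventually_sequentially by auto
  define N where "N = max N0 1"
  have Npos: "N > 0" by (simp add: N_def)
  have N3: "real N ^ 3 * s ^ N \<le> t / 16" using N0[of N] by (simp add: N_def)
  have N1: "real N * s ^ N \<le> t"
  proof -
    have n1: "1 \<le> real N" using Npos by simp
    have "1 * 1 \<le> real N * real N" using n1 by (intro mult_mono) auto
    then have "real N * 1 \<le> real N * (real N * real N)" using n1 by (intro mult_left_mono) auto
    then have "real N \<le> real N ^ 3" by (simp add: power3_eq_cube)
    then have "real N * s ^ N \<le> real N ^ 3 * s ^ N" using s0 by (intro mult_right_mono) auto
    then show ?thesis using N3 t0 by simp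
  qed
  define SA where "SA = A \<inter> {..<N}"
  define d where "d = (\<lambda>n. real (card {p \<in> SA \<times> SA. fst p + snd p = n})
                  - c * real (card {p \<in> {..<N} \<times> {1..N}. fst p + snd p = n}))"
  define F where "F = (\<Sum>a\<in>SA. s ^ a)"
  define lam where "lam = t / \<epsilon>"
  have lam0: "lam > 0" using t0 \<epsilon>0 by (simp add: lam_def)
  have F0: "F \<ge> 0" unfolding F_def using s0 by (simp add: sum_nonneg)
  have G1: "(\<Sum>i<N. s ^ i) \<le> 1 / t" using geom_le[of s N] s0 ts by simp
  have G2: "(\<Sum>j\<in>{1..N}. s ^ j) \<le> 1 / t"
  proof -
    have "(\<Sum>j\<in>{1..N}. s ^ j) \<le> (\<Sum>j<N+1. s ^ j)"
      using s0 by (intro sum_mono2) auto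
    also have "\<dots> \<le> 1 / t" using geom_le[of s "N+1"] s0 ts by simp
    finally show ?thesis .
  qed
  have X1: "(\<Sum>n<N. real n * s ^ n) \<le> 1 / t\<^sup>2" using nx_bounds(1)[of s N] s0 Npos ts by simp
  have X2: "(s - real N * s ^ N) / t\<^sup>2 \<le> (\<Sum>n<N. real n * s ^ n)" using nx_bounds(2)[of s N] s0 Npos ts by simp
  have dlow: "d n = e n" if "n < N" for n
    using that card_W[of n N] card_rep[of n N A] by (simp add: d_def e_def SA_def)
  have B1: "(\<Sum>n<N. (d n)\<^sup>2 * s ^ n) \<le> 2 * \<epsilon>\<^sup>2 / t\<^sup>2 + 2 * C\<^sup>2 / t"
  proof -
    have "(\<Sum>n<N. (d n)\<^sup>2 * s ^ n) \<le> (\<Sum>n<N. (2 * \<epsilon>\<^sup>2 * real n + 2 * C\<^sup>2) * s ^ n)"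
      using s0 by (intro sum_mono) (simp add: dlow e2 mult_right_mono)
    also have "\<dots> = 2 * \<epsilon>\<^sup>2 * (\<Sum>n<N. real n * s ^ n) + 2 * C\<^sup>2 * (\<Sum>n<N. s ^ n)"
      by (simp add: algebra_simps sum.distrib sum_distrib_left sum_distrib_right)
    also have "\<dots> \<le> 2 * \<epsilon>\<^sup>2 * (1 / t\<^sup>2) + 2 * C\<^sup>2 * (1 / t)"
      using X1 G1 by (intro add_mono mult_left_mono) auto
    finally show ?thesis by simp
  qed
  have B2: "(\<Sum>n\<in>{N..<2*N}. (d n)\<^sup>2 * s ^ n) \<le> t"
  proof -
    have "(d n)\<^sup>2 * s ^ n \<le> 16 * (real N)\<^sup>2 * s ^ N" if "n \<in> {N..<2*N}" for n
    proof -
      have c1: "card {p \<in> SA \<times> SA. fst p + snd p = n} \<le> n + 1" by (rule card_pairs_le)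
      have c2: "card {p \<in> {..<N} \<times> {1..N}. fst p + snd p = n} \<le> n + 1" by (rule card_pairs_le)
      define a where "a = real (card {p \<in> SA \<times> SA. fst p + snd p = n})"
      define b where "b = real (card {p \<in> {..<N} \<times> {1..N}. fst p + snd p = n})"
      have a1: "a \<le> real n + 1" "0 \<le> a" using c1 by (simp_all add: a_def)
      have b1: "b \<le> real n + 1" "0 \<le> b" using c2 by (simp_all add: b_def)
      have cb1: "c * b \<le> c * (real n + 1)" using b1 assms by (intro mult_left_mono) auto
      have cb2: "c * (real n + 1) \<le> real n + 1" using assms by simp
      have cb0: "0 \<le> c * b" using b1 assms by simp
      have dn: "d n = a - c * b" by (simp add: d_def a_def b_def)
      have nN: "real n + 1 \<le> 2 * real N" using that by simp
      have "\<bar>d n\<bar> \<le> 4 * real N" unfolding dn using a1 cb0 cb1 cb2 nN by linarith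
      then have "(d n)\<^sup>2 \<le> (4 * real N)\<^sup>2"
        by (metis abs_ge_zero power2_abs power_mono)
      moreover have "s ^ n \<le> s ^ N" using that s0 by (intro power_decreasing) auto
      ultimately show ?thesis using s0
        by (intro mult_mono) (auto simp: power_mult_distrib)
    qed
    then have "(\<Sum>n\<in>{N..<2*N}. (d n)\<^sup>2 * s ^ n) \<le> real (card {N..<2*N}) * (16 * (real N)\<^sup>2 * s ^ N)"
      by (rule sum_bounded_above)
    also have "\<dots> = 16 * (real N ^ 3 * s ^ N)" by (simp add: power2_eq_square power3_eq_cube)
    also have "\<dots> \<le> t" using N3 by simp
    finally show ?thesis .
  qed
  have Bsplit: "(\<Sum>n<2*N. (d n)\<^sup>2 * s ^ n) = (\<Sum>n<N. (d n)\<^sup>2 * s ^ n) + (\<Sum>n\<in>{N..<2*N}. (d n)\<^sup>2 * s ^ n)"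
  proof -
    have u: "{..<2*N} = {..<N} \<union> {N..<2*N}" by auto
    have "(\<Sum>n\<in>{..<N} \<union> {N..<2*N}. (d n)\<^sup>2 * s ^ n) = (\<Sum>n<N. (d n)\<^sup>2 * s ^ n) + (\<Sum>n\<in>{N..<2*N}. (d n)\<^sup>2 * s ^ n)"
      by (rule sum.union_disjoint) auto
    then show ?thesis unfolding u .
  qed
  define B where "B = (\<Sum>n<2*N. (d n)\<^sup>2 * s ^ n)"
  have Bb: "B \<le> 2 * \<epsilon>\<^sup>2 / t\<^sup>2 + 2 * C\<^sup>2 / t + t" using B1 B2 Bsplit by (simp add: B_def)
  have key: "F \<le> c * ((\<Sum>i<N. s ^ i) + (\<Sum>j\<in>{1..N}. s ^ j)) / 2 + (lam * B + 1 / lam) / 2"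
    unfolding F_def B_def SA_def d_def
    by (rule key_ineq[OF Npos _ _ lam0]) (use s0 assms in auto)
  have up1: "c * ((\<Sum>i<N. s ^ i) + (\<Sum>j\<in>{1..N}. s ^ j)) / 2 \<le> c / t"
  proof -
    have "c * ((\<Sum>i<N. s ^ i) + (\<Sum>j\<in>{1..N}. s ^ j)) \<le> c * (1 / t + 1 / t)"
      using G1 G2 assms by (intro mult_left_mono) auto
    then show ?thesis by simp
  qed
  have up2: "t * (lam * B + 1 / lam) \<le> 4 * \<epsilon>"
  proof -
    have "lam * B \<le> lam * (2 * \<epsilon>\<^sup>2 / t\<^sup>2 + 2 * C\<^sup>2 / t + t)" using Bb lam0 by (intro mult_left_mono) auto
    then have "t * (lam * B + 1 / lam) \<le> t * (lam * (2 * \<epsilon>\<^sup>2 / t\<^sup>2 + 2 * C\<^sup>2 / t + t) + 1 / lam)"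
      using t0 by (intro mult_left_mono) auto
    also have "\<dots> = 3 * \<epsilon> + t * (2 * C\<^sup>2 + t\<^sup>2) / \<epsilon>"
      using t0 \<epsilon>0 by (simp add: lam_def field_simps power2_eq_square)
    also have "t * (2 * C\<^sup>2 + t\<^sup>2) \<le> t * (2 * C\<^sup>2 + 1)"
    proof -
      have "t\<^sup>2 \<le> 1" using t0 th by (simp add: power2_eq_square mult_le_one)
      then show ?thesis using t0 by (intro mult_left_mono) auto
    qed
    also have "t * (2 * C\<^sup>2 + 1) \<le> \<epsilon>\<^sup>2" by (rule tA)
    also have "\<epsilon>\<^sup>2 / \<epsilon> = \<epsilon>" using \<epsilon>0 by (simp add: power2_eq_square)
    finally show ?thesis using \<epsilon>0 by (simp add: divide_right_mono)
  qed
  have upper: "t * F \<le> c + 2 * \<epsilon>"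
  proof -
    have "F \<le> c / t + (lam * B + 1 / lam) / 2" using key up1 by linarith
    then have "t * F \<le> t * (c / t + (lam * B + 1 / lam) / 2)"
      using t0 by (intro mult_left_mono) auto
    also have "\<dots> = c + t * (lam * B + 1 / lam) / 2" using t0 by (simp add: field_simps)
    finally have "t * F \<le> c + t * (lam * B + 1 / lam) / 2" .
    moreover have "t * (lam * B + 1 / lam) / 2 \<le> 2 * \<epsilon>" using up2 by simp
    ultimately show ?thesis by linarith
  qed
  have lower: "(t * F)\<^sup>2 \<ge> c - 2 * \<epsilon>"
  proof -
    have "F * F = (\<Sum>n<2*N. real (card {p \<in> SA \<times> SA. fst p + snd p = n}) * s ^ n)"
      unfolding F_def by (rule group_prod) (auto simp: SA_def)
    also have "\<dots> \<ge> (\<Sum>n<N. real (card {p \<in> SA \<times> SA. fst p + snd p = n}) * s ^ n)"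
      using s0 by (intro sum_mono2) auto
    finally have "F * F \<ge> (\<Sum>n<N. real (card {p \<in> SA \<times> SA. fst p + snd p = n}) * s ^ n)" .
    also have "(\<Sum>n<N. real (card {p \<in> SA \<times> SA. fst p + snd p = n}) * s ^ n) = (\<Sum>n<N. (c * real n + e n) * s ^ n)"
      by (intro sum.cong refl) (simp add: SA_def card_rep e_def)
    also have "\<dots> \<ge> (\<Sum>n<N. (c * real n - (\<epsilon> * (real n + 1) + C)) * s ^ n)"
    proof -
      have "c * real n - (\<epsilon> * (real n + 1) + C) \<le> c * real n + e n" for n
        using e1[of n] by linarith
      then show ?thesis using s0 by (intro sum_mono mult_right_mono) auto
    qed
    finally have "F * F \<ge> (\<Sum>n<N. (c * real n - (\<epsilon> * (real n + 1) + C)) * s ^ n)" .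
    also have "(\<Sum>n<N. (c * real n - (\<epsilon> * (real n + 1) + C)) * s ^ n)
        = (c - \<epsilon>) * (\<Sum>n<N. real n * s ^ n) - (\<epsilon> + C) * (\<Sum>n<N. s ^ n)"
    proof -
      have "(\<Sum>n<N. (c * real n - (\<epsilon> * (real n + 1) + C)) * s ^ n)
          = (\<Sum>n<N. (c - \<epsilon>) * (real n * s ^ n) - (\<epsilon> + C) * s ^ n)"
        by (rule sum.cong[OF refl]) (simp add: algebra_simps)
      also have "\<dots> = (\<Sum>n<N. (c - \<epsilon>) * (real n * s ^ n)) - (\<Sum>n<N. (\<epsilon> + C) * s ^ n)"
        by (rule sum_subtractf)
      also have "\<dots> = (c - \<epsilon>) * (\<Sum>n<N. real n * s ^ n) - (\<epsilon> + C) * (\<Sum>n<N. s ^ n)"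
        by (simp only: sum_distrib_left)
      finally show ?thesis .
    qed
    finally have FF: "F * F \<ge> c * (\<Sum>n<N. real n * s ^ n) - \<epsilon> * (\<Sum>n<N. real n * s ^ n) - (\<epsilon> + C) * (\<Sum>n<N. s ^ n)"
      by (simp add: algebra_simps)
    have "c * ((s - real N * s ^ N) / t\<^sup>2) \<le> c * (\<Sum>n<N. real n * s ^ n)"
      using X2 assms by (intro mult_left_mono) auto
    moreover have "\<epsilon> * (\<Sum>n<N. real n * s ^ n) \<le> \<epsilon> * (1 / t\<^sup>2)"
      using X1 \<epsilon>0 by (intro mult_left_mono) auto
    moreover have "(\<epsilon> + C) * (\<Sum>n<N. s ^ n) \<le> (\<epsilon> + C) * (1 / t)"
      using G1 \<epsilon>0 C0 by (intro mult_left_mono) auto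
    ultimately have "F * F \<ge> c * ((s - real N * s ^ N) / t\<^sup>2) - \<epsilon> * (1 / t\<^sup>2) - (\<epsilon> + C) * (1 / t)"
      using FF by linarith
    then have "t\<^sup>2 * (F * F) \<ge> t\<^sup>2 * (c * ((s - real N * s ^ N) / t\<^sup>2) - \<epsilon> * (1 / t\<^sup>2) - (\<epsilon> + C) * (1 / t))"
      by (intro mult_left_mono) auto
    also have "t\<^sup>2 * (c * ((s - real N * s ^ N) / t\<^sup>2) - \<epsilon> * (1 / t\<^sup>2) - (\<epsilon> + C) * (1 / t))
        = c * (s - real N * s ^ N) - \<epsilon> - (\<epsilon> + C) * t"
      using t0 by (simp add: field_simps power2_eq_square)
    finally have L: "t\<^sup>2 * (F * F) \<ge> c * (s - real N * s ^ N) - \<epsilon> - (\<epsilon> + C) * t" .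
    have "c * (s - real N * s ^ N) \<ge> c * (1 - 2 * t)"
      using N1 assms by (intro mult_left_mono) (auto simp: s_def)
    then have "t\<^sup>2 * (F * F) \<ge> c - \<epsilon> - t * (2 * c + \<epsilon> + C)" using L by (simp add: algebra_simps)
    moreover have "t * (2 * c + \<epsilon> + C) \<le> \<epsilon>"
    proof -
      have "t * (2 * c + \<epsilon> + C + 1) = t * (2 * c + \<epsilon> + C) + t" by (simp add: algebra_simps)
      then show ?thesis using tB t0 by linarith
    qed
    ultimately show ?thesis by (simp add: power2_eq_square mult_ac)
  qed
  have y0: "t * F \<ge> 0" using t0 F0 by simp
  have "(t * F)\<^sup>2 \<le> (c + 2 * \<epsilon>)\<^sup>2" using upper y0 by (intro power_mono) auto
  also have "(c + 2 * \<epsilon>)\<^sup>2 = c\<^sup>2 + 4 * c * \<epsilon> + 4 * \<epsilon>\<^sup>2" by (simp add: power2_eq_square algebra_simps)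
  also have "\<dots> \<le> c\<^sup>2 + 8 * \<epsilon>"
  proof -
    have "c * \<epsilon> \<le> \<epsilon>" using assms \<epsilon>0 by simp
    moreover have "\<epsilon>\<^sup>2 \<le> \<epsilon>" using \<epsilon>0 \<epsilon>1 by (simp add: power2_eq_square mult_le_cancel_right1)
    ultimately show ?thesis by simp
  qed
  finally have "(t * F)\<^sup>2 \<le> c\<^sup>2 + 8 * \<epsilon>" .
  then have "c - 2 * \<epsilon> \<le> c\<^sup>2 + 8 * \<epsilon>" using lower by linarith
  moreover have "20 * \<epsilon> = c - c\<^sup>2" by (simp add: \<epsilon>_def)
  ultimately show False using \<epsilon>0 by linarith
qed

end
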